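(* Let $S$ be a bounded operator on $C([0,\omega_1])$ whose final column vanishes, i.e. $S_{\alpha,\omega_1}=0$ for all $\alpha\in[0,\omega_1]$. Then for each pair $\zeta,\eta$ of countable ordinals there is a countable ordinal $\xi\ge\zeta$ such that $P_\eta S(I-P_\xi)=0$.
   Context: $\omega_1$ is the first uncountable ordinal; $[0,\omega_1]$ has the order topology and $C([0,\omega_1])$ is the Banach space of continuous scalar-valued functions with sup norm. The matrix of an operator $S$ on $C([0,\omega_1])$ is the unique family of scalars $S_{\alpha,\beta}$ with $\sum_\beta|S_{\alpha,\beta}|<\infty$ and $Sf(\alpha)=\sum_{\beta\in[0,\omega_1]}S_{\alpha,\beta}f(\beta)$ for all $f$, $\alpha$. For a countable ordinal $\sigma$, $P_\sigma f=f\cdot\mathbf{1}_{[0,\sigma]}$; $I$ is the identity operator. *)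

theory Defs
  imports "HOL-Analysis.Analysis"
begin

text \<open>The compact space [0,omega_1] is modelled by a type 'b carrying a well-order with a
  top element (omega_1) and its order topology, such that the elements strictly below top
  form an uncountable set all of whose proper initial segments are countable.
  These conditions characterise [0,omega_1] up to order isomorphism.\<close>

definition is_omega1_plus_one :: "'b::{wellorder, order_top} itself \<Rightarrow> bool" where
  "is_omega1_plus_one _ \<longleftrightarrow>
     uncountable {x::'b. x < top} \<and> (\<forall>a::'b. a < top \<longrightarrow> countable {x. x < a})"

definition Cfun :: "('b::topological_space \<Rightarrow> 'k::real_normed_field) set" where
  "Cfun = {f. continuous_on UNIV f}"

definition bounded_operator ::
  "(('b::topological_space \<Rightarrow> 'k::real_normed_field) \<Rightarrow> ('b \<Rightarrow> 'k)) \<Rightarrow> bool" where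
  "bounded_operator S \<longleftrightarrow>
     (\<forall>f\<in>Cfun. S f \<in> Cfun) \<and>
     (\<forall>f\<in>Cfun. \<forall>g\<in>Cfun. S (\<lambda>x. f x + g x) = (\<lambda>x. S f x + S g x)) \<and>
     (\<forall>f\<in>Cfun. \<forall>c. S (\<lambda>x. c * f x) = (\<lambda>x. c * S f x)) \<and>
     (\<exists>K. \<forall>f\<in>Cfun. \<forall>B. (\<forall>x. norm (f x) \<le> B) \<longrightarrow> (\<forall>a. norm (S f a) \<le> K * B))"

definition is_matrix_of ::
  "(('b::topological_space \<Rightarrow> 'k::{real_normed_field,banach}) \<Rightarrow> ('b \<Rightarrow> 'k)) \<Rightarrow> ('b \<Rightarrow> 'b \<Rightarrow> 'k) \<Rightarrow> bool" where
  "is_matrix_of S M \<longleftrightarrow>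
     (\<forall>a. (\<lambda>b. norm (M a b)) summable_on UNIV) \<and>
     (\<forall>f\<in>Cfun. \<forall>a. S f a = (\<Sum>\<^sub>\<infinity>b. M a b * f b))"

definition Pproj :: "'b::linorder \<Rightarrow> ('b \<Rightarrow> 'k::real_normed_field) \<Rightarrow> ('b \<Rightarrow> 'k)" where
  "Pproj \<sigma> f = (\<lambda>x. if x \<le> \<sigma> then f x else 0)"

end

theory Submission
  imports Defs
begin

lemma Pproj_cont:
  fixes f :: "'b::{wellorder, order_top, order_topology} \<Rightarrow> 'k::real_normed_field"
  assumes "f \<in> Cfun" "\<xi> < top"
  shows "Pproj \<xi> f \<in> Cfun"
proof -
  define s where "s = (LEAST y. \<xi> < y)"
  have s1: "\<xi> < s" unfolding s_def by (rule LeastI[of _ top]) (rule assms(2))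
  have eq: "{x. x \<le> \<xi>} = {..<s}"
  proof (auto)
    fix x assume "x \<le> \<xi>" thus "x < s" using s1 by simp
  next
    fix x assume "x < s"
    show "x \<le> \<xi>"
    proof (rule ccontr)
      assume "\<not> x \<le> \<xi>" hence "\<xi> < x" by simp
      hence "s \<le> x" unfolding s_def by (rule Least_le)
      thus False using \<open>x < s\<close> by simp
    qed
  qed
  have op: "open {x. x \<le> \<xi>}" unfolding eq by simp
  have cl: "closed {x. x \<le> \<xi>}" proof -
    have "- {x. x \<le> \<xi>} = {\<xi><..}" by (auto simp: not_le)
    hence "open (- {x. x \<le> \<xi>})" by simp
    thus ?thesis by (simp add: closed_def)
  qed
  have c: "continuous_on UNIV f" using assms(1) by (simp add: Cfun_def)
  have "continuous_on ({x. x \<le> \<xi>} \<union> (- {x. x \<le> \<xi>})) (\<lambda>x. if x \<le> \<xi> then f x else 0)"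
    apply (rule continuous_on_cases)
    using cl op c by (auto intro: continuous_on_subset)
  thus ?thesis by (simp add: Cfun_def Pproj_def)
qed

theorem lemma4p4:
  fixes S :: "('b::{wellorder, order_top, order_topology} \<Rightarrow> 'k::{real_normed_field,banach}) \<Rightarrow> ('b \<Rightarrow> 'k)"
  assumes "is_omega1_plus_one TYPE('b)"
    and "bounded_operator S"
    and "is_matrix_of S M"
    and "\<forall>a. M a top = 0"
  shows "\<forall>\<zeta> \<eta>. \<zeta> < top \<and> \<eta> < top \<longrightarrow>
           (\<exists>\<xi>. \<zeta> \<le> \<xi> \<and> \<xi> < top \<and>
              (\<forall>f\<in>Cfun. Pproj \<eta> (S (\<lambda>x. f x - Pproj \<xi> f x)) = (\<lambda>x. 0)))"
proof (intro allI impI)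
  fix \<zeta> \<eta> :: 'b
  assume zh: "\<zeta> < top \<and> \<eta> < top"
  have unc: "uncountable {x::'b. x < top}" and segs: "\<And>a::'b. a < top \<Longrightarrow> countable {x. x < a}"
    using assms(1) by (auto simp: is_omega1_plus_one_def)
  have rows: "\<And>a. countable {b. M a b \<noteq> 0}"
    using assms(3) abs_summable_countable[of "M _" UNIV] by (auto simp: is_matrix_of_def)
  define C where "C = insert \<zeta> ((\<Union>a\<in>{x. x \<le> \<eta>}. {b. M a b \<noteq> 0}))"
  have "{x. x \<le> \<eta>} = insert \<eta> {x. x < \<eta>}" by auto
  hence "countable {x. x \<le> \<eta>}" using segs zh by simp
  hence cC: "countable C" unfolding C_def using rows by auto
  have Ct: "C \<subseteq> {x. x < top}" unfolding C_def using zh assms(4)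
    by (auto simp: less_le)
  have "\<exists>u. u < top \<and> (\<forall>c\<in>C. c \<le> u)"
  proof (rule ccontr)
    assume H: "\<not> ?thesis"
    have "{x::'b. x < top} \<subseteq> (\<Union>c\<in>C. {x. x < c})"
    proof
      fix x assume "x \<in> {x::'b. x < top}"
      with H obtain c where "c \<in> C" "\<not> c \<le> x" by auto
      thus "x \<in> (\<Union>c\<in>C. {x. x < c})" by (auto simp: not_le)
    qed
    moreover have "countable (\<Union>c\<in>C. {x. x < c})"
      using cC Ct segs by (intro countable_UN) auto
    ultimately show False using unc countable_subset by blast
  qed
  then obtain u where u: "u < top" "\<forall>c\<in>C. c \<le> u" by blast
  show "\<exists>\<xi>. \<zeta> \<le> \<xi> \<and> \<xi> < top \<and>
              (\<forall>f\<in>Cfun. Pproj \<eta> (S (\<lambda>x. f x - Pproj \<xi> f x)) = (\<lambda>x. 0))"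
  proof (intro exI conjI ballI)
    show "\<zeta> \<le> u" using u by (simp add: C_def)
    show "u < top" by (rule u(1))
    fix f :: "'b \<Rightarrow> 'k" assume f: "f \<in> Cfun"
    have Pf: "Pproj u f \<in> Cfun" by (rule Pproj_cont[OF f u(1)])
    have g: "(\<lambda>x. f x - Pproj u f x) \<in> Cfun"
      using f Pf by (auto simp: Cfun_def intro: continuous_intros)
    show "Pproj \<eta> (S (\<lambda>x. f x - Pproj u f x)) = (\<lambda>x. 0)"
    proof
      fix a
      show "Pproj \<eta> (S (\<lambda>x. f x - Pproj u f x)) a = 0"
      proof (cases "a \<le> \<eta>")
        case True
        have z: "M a b * (f b - Pproj u f b) = 0" for b
        proof (cases "b \<le> u")
          case True thus ?thesis by (simp add: Pproj_def)
        next
          case False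
          hence "b \<notin> C" using u by auto
          hence "M a b = 0" using \<open>a \<le> \<eta>\<close> by (auto simp: C_def)
          thus ?thesis by simp
        qed
        have "S (\<lambda>x. f x - Pproj u f x) a = (\<Sum>\<^sub>\<infinity>b. M a b * (f b - Pproj u f b))"
          using assms(3) g by (simp add: is_matrix_of_def)
        also have "\<dots> = (\<Sum>\<^sub>\<infinity>b::'b. (0::'k))" using z by presburger
        also have "\<dots> = 0" by simp
        finally show ?thesis by (simp add: Pproj_def)
      next
        case False thus ?thesis by (simp add: Pproj_def)
      qed
    qed
  qed
qed

end
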